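(* Let $(E,\mathscr{T},\le)$ be a topological preordered space and let $c_1:E\to c_1E$, $c_2:E\to c_2E$ be preorder compactifications of $E$ with $c_1E$ and $c_2E$ Hausdorff. If $c_1\le c_2$, then the continuous isotone map $C:c_2E\to c_1E$ with $C\circ c_2=c_1$ satisfies $C(c_2E)=c_1E$, $C(c_2(E))=c_1(E)$ and $C(c_2E\setminus c_2(E))=c_1E\setminus c_1(E)$.
   Context: A topological preordered space is a triple $(E,\mathscr{T},\le)$ with $(E,\mathscr{T})$ a topological space and $\le$ a reflexive transitive relation on $E$. A map is isotone if $x\le y\Rightarrow f(x)\le f(y)$. A preorder embedding is a continuous isotone injective map which is a homeomorphism onto its image and whose inverse (on the image, with the induced preorder) is isotone. A preorder compactification of $E$ is a preorder embedding $c:E\to cE$ into a compact topological preordered space $(cE,\mathscr{T}_c,\le_c)$ with $c(E)$ dense in $cE$. For two preorder compactifications, $c_1\le c_2$ means there is a continuous isotone map $C:c_2E\to c_1E$ with $C\circ c_2=c_1$. *)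

theory Defs
  imports "HOL-Analysis.Analysis"
begin

definition preorder_rel_on :: "'a set \<Rightarrow> ('a \<Rightarrow> 'a \<Rightarrow> bool) \<Rightarrow> bool" where
  "preorder_rel_on S le \<longleftrightarrow>
     (\<forall>x\<in>S. le x x) \<and> (\<forall>x\<in>S. \<forall>y\<in>S. \<forall>z\<in>S. le x y \<longrightarrow> le y z \<longrightarrow> le x z)"

definition isotone_on :: "'a set \<Rightarrow> ('a \<Rightarrow> 'a \<Rightarrow> bool) \<Rightarrow> ('b \<Rightarrow> 'b \<Rightarrow> bool) \<Rightarrow> ('a \<Rightarrow> 'b) \<Rightarrow> bool" where
  "isotone_on S le le' f \<longleftrightarrow> (\<forall>x\<in>S. \<forall>y\<in>S. le x y \<longrightarrow> le' (f x) (f y))"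

definition preorder_embedding ::
  "'a topology \<Rightarrow> ('a \<Rightarrow> 'a \<Rightarrow> bool) \<Rightarrow> 'b topology \<Rightarrow> ('b \<Rightarrow> 'b \<Rightarrow> bool) \<Rightarrow> ('a \<Rightarrow> 'b) \<Rightarrow> bool" where
  "preorder_embedding X le Y le' c \<longleftrightarrow>
     continuous_map X Y c \<and> isotone_on (topspace X) le le' c \<and> inj_on c (topspace X) \<and>
     homeomorphic_map X (subtopology Y (c ` topspace X)) c \<and>
     (\<forall>x\<in>topspace X. \<forall>y\<in>topspace X. le' (c x) (c y) \<longrightarrow> le x y)"

definition preorder_compactification ::
  "'a topology \<Rightarrow> ('a \<Rightarrow> 'a \<Rightarrow> bool) \<Rightarrow> 'b topology \<Rightarrow> ('b \<Rightarrow> 'b \<Rightarrow> bool) \<Rightarrow> ('a \<Rightarrow> 'b) \<Rightarrow> bool" where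
  "preorder_compactification X le Y le' c \<longleftrightarrow>
     preorder_rel_on (topspace Y) le' \<and> compact_space Y \<and>
     preorder_embedding X le Y le' c \<and>
     Y closure_of (c ` topspace X) = topspace Y"

end

theory Submission
  imports Defs
begin

theorem mainTheorem2:
  fixes X :: "'a topology" and le :: "'a \<Rightarrow> 'a \<Rightarrow> bool"
    and Y1 :: "'b topology" and le1 :: "'b \<Rightarrow> 'b \<Rightarrow> bool" and c1 :: "'a \<Rightarrow> 'b"
    and Y2 :: "'c topology" and le2 :: "'c \<Rightarrow> 'c \<Rightarrow> bool" and c2 :: "'a \<Rightarrow> 'c"
    and C :: "'c \<Rightarrow> 'b"
  assumes "preorder_rel_on (topspace X) le"
    and "preorder_compactification X le Y1 le1 c1"
    and "preorder_compactification X le Y2 le2 c2"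
    and "Hausdorff_space Y1" and "Hausdorff_space Y2"
    and "continuous_map Y2 Y1 C" and "isotone_on (topspace Y2) le2 le1 C"
    and "\<forall>x\<in>topspace X. C (c2 x) = c1 x"
  shows "C ` topspace Y2 = topspace Y1 \<and>
         C ` (c2 ` topspace X) = c1 ` topspace X \<and>
         C ` (topspace Y2 - c2 ` topspace X) = topspace Y1 - c1 ` topspace X"
proof -
  note c1 = assms(2)[unfolded preorder_compactification_def preorder_embedding_def]
  note c2 = assms(3)[unfolded preorder_compactification_def preorder_embedding_def]
  have cm1: "continuous_map X Y1 c1" and hm1: "homeomorphic_map X (subtopology Y1 (c1 ` topspace X)) c1"
    and inj1: "inj_on c1 (topspace X)" and d1: "Y1 closure_of (c1 ` topspace X) = topspace Y1"
    using c1 by auto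
  have cm2: "continuous_map X Y2 c2" and d2: "Y2 closure_of (c2 ` topspace X) = topspace Y2"
    and comp2: "compact_space Y2"
    using c2 by auto
  have CC: "\<And>x. x \<in> topspace X \<Longrightarrow> C (c2 x) = c1 x" using assms(8) by auto
  have img2: "C ` (c2 ` topspace X) = c1 ` topspace X"
    by (force simp: image_image CC)
  have sub: "C ` topspace Y2 \<subseteq> topspace Y1"
    using assms(6) continuous_map_image_subset_topspace by blast
  have "compactin Y1 (C ` topspace Y2)"
    using image_compactin comp2 assms(6) compact_space_def by blast
  then have cl: "closedin Y1 (C ` topspace Y2)"
    using compactin_imp_closedin assms(4) by blast
  have "c1 ` topspace X \<subseteq> C ` topspace Y2"
    using img2 continuous_map_image_subset_topspace[OF cm2] by blast
  then have "topspace Y1 \<subseteq> C ` topspace Y2"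
    using closure_of_minimal[OF _ cl] d1 by metis
  then have surj: "C ` topspace Y2 = topspace Y1" using sub by blast
  have key: False if z: "z \<in> topspace Y2" "z \<notin> c2 ` topspace X" and x: "x \<in> topspace X"
    and eq: "C z = c1 x" for z x
  proof -
    have "c2 x \<in> topspace Y2" using cm2 x continuous_map_image_subset_topspace by blast
    moreover have "z \<noteq> c2 x" using z x by blast
    ultimately obtain U V where UV: "openin Y2 U" "openin Y2 V" "z \<in> U" "c2 x \<in> V" "disjnt U V"
      using assms(5) z unfolding Hausdorff_space_def by metis
    define P where "P = {e \<in> topspace X. c2 e \<in> V}"
    have oP: "openin X P" unfolding P_def
      using UV(2) cm2 openin_continuous_map_preimage by blast
    have "openin (subtopology Y1 (c1 ` topspace X)) (c1 ` P)"
      using hm1 oP homeomorphic_map_openness_eq by blast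
    then obtain W where W: "openin Y1 W" "c1 ` P = W \<inter> c1 ` topspace X"
      unfolding openin_subtopology by blast
    have xP: "x \<in> P" using x UV(4) P_def by blast
    have "C z \<in> W" using eq xP W(2) by blast
    define Ob where "Ob = U \<inter> {y \<in> topspace Y2. C y \<in> W}"
    have oO: "openin Y2 Ob" unfolding Ob_def
      using UV(1) openin_continuous_map_preimage[OF assms(6) W(1)] by blast
    have "z \<in> Ob" using Ob_def z UV(3) \<open>C z \<in> W\<close> by blast
    then have "z \<in> Y2 closure_of (c2 ` topspace X)" using d2 z by blast
    then obtain y where y: "y \<in> c2 ` topspace X" "y \<in> Ob"
      using oO \<open>z \<in> Ob\<close> unfolding in_closure_of by blast
    then obtain e where e: "e \<in> topspace X" "y = c2 e" by blast
    have "c1 e \<in> W \<inter> c1 ` topspace X" using y e Ob_def CC by auto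
    then have "c1 e \<in> c1 ` P" using W(2) by blast
    then obtain e' where "e' \<in> P" "c1 e = c1 e'" by blast
    then have "e = e'" using inj1 e(1) \<open>e' \<in> P\<close> unfolding P_def inj_on_def by blast
    then have "y \<in> V" using \<open>e' \<in> P\<close> P_def e by blast
    moreover have "y \<in> U" using y Ob_def by blast
    ultimately show False using UV(5) disjnt_iff by metis
  qed
  have rem: "C ` (topspace Y2 - c2 ` topspace X) = topspace Y1 - c1 ` topspace X"
  proof
    show "C ` (topspace Y2 - c2 ` topspace X) \<subseteq> topspace Y1 - c1 ` topspace X"
    proof
      fix w assume "w \<in> C ` (topspace Y2 - c2 ` topspace X)"
      then obtain z where z: "z \<in> topspace Y2" "z \<notin> c2 ` topspace X" "w = C z" by blast
      have "w \<in> topspace Y1" using z sub by blast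
      moreover have "w \<notin> c1 ` topspace X"
      proof
        assume "w \<in> c1 ` topspace X"
        then obtain x where "x \<in> topspace X" "w = c1 x" by blast
        then show False using key[of z x] z by simp
      qed
      ultimately show "w \<in> topspace Y1 - c1 ` topspace X" by blast
    qed
    show "topspace Y1 - c1 ` topspace X \<subseteq> C ` (topspace Y2 - c2 ` topspace X)"
    proof
      fix w assume w: "w \<in> topspace Y1 - c1 ` topspace X"
      then obtain z where z: "z \<in> topspace Y2" "w = C z" using surj by blast
      have "z \<notin> c2 ` topspace X" using z w CC by auto
      then show "w \<in> C ` (topspace Y2 - c2 ` topspace X)" using z by blast
    qed
  qed
  show ?thesis using surj img2 rem by blast
qed

end
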